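(* Let $3\le n\le k$ be integers and let $X$ be the discrete-time Markov chain on $\mathbb{N}^{n-1}$ described in the context. Fix $j\in\{1,\dots,n-1\}$ and let $\mathbf{x}_j=(0,\dots,0,x_{j+1},\dots,x_{n-1})$ with the first $j$ entries equal to $0$ and $x_i\ge1$ for $i=j+1,\dots,n-1$. Then for every $\mathbf{r}=(r_1,\dots,r_{n-1})\in E_j$, setting $\mathbf{r}(\mathbf{x}_j)=\mathbf{x}_j+\mathbf{r}\in S^\star$, $$q^\star(\mathbf{x}_j,\mathbf{r}(\mathbf{x}_j))=\binom{k-n+j+1}{k-n+1}\frac{(|\mathbf{r}|-1)!}{r_1!\cdots r_{n-1}!}\Big(\frac1k\Big)^{|\mathbf{r}|}\sum_{l=1}^{j}\mathds{1}_{\{r_l=1\}},$$ and $\sum_{\mathbf{r}\in E_j}q^\star(\mathbf{x}_j,\mathbf{r}(\mathbf{x}_j))=1$. Moreover, $q^\star(\mathbf{x}_j,\mathbf{x}')=0$ for every $\mathbf{x}'\in S^\star$ that is not of the form $\mathbf{x}_j+\mathbf{r}$ with $\mathbf{r}\in E_j$.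
   Context: $\mathbb{N}=\{0,1,2,\dots\}$, $|\mathbf{r}|=r_1+\dots+r_{n-1}$. $\mathbf{0}$, $\mathbf{1}$ are the all-zero and all-one vectors of dimension $n-1$, $\mathbf{e}_l$ the $l$-th unit vector. For $j=0,\dots,n-1$, $R_j$ is the set of $\mathbf{x}\in\mathbb{N}^{n-1}$ with exactly $j$ zero entries. $X$ is the Markov chain on $\mathbb{N}^{n-1}$ with nonzero transition probabilities: from $\mathbf{x}\in R_0$, to $\mathbf{x}-\mathbf{1}$ w.p. $\frac{k-(n-1)}{k}$ and to $\mathbf{x}+\mathbf{e}_l$ w.p. $\frac1k$ ($l=1,\dots,n-1$); from $\mathbf{x}\in R_j$, $1\le j\le n-2$, to $\mathbf{x}+\mathbf{e}_l$ w.p. $\frac{k-(n-1-j)}{kj}$ if $x_l=0$ and w.p. $\frac1k$ if $x_l\ge1$; from $\mathbf{0}$ to $\mathbf{e}_l$ w.p. $\frac1{n-1}$. Let $S=\{\mathbf{x}\in\mathbb{N}^{n-1}:x_i\ge1\ \forall i\}$, $S^c$ its complement in $\mathbb{N}^{n-1}$, and $S^\star=\{\mathbf{x}\in S:\mathbf{x}-\mathbf{1}\notin S\}$ (elements of $S$ with at least one entry equal to $1$). For $\mathbf{x}\in S^c$ and $\mathbf{y}\in S^\star$, $q^\star(\mathbf{x},\mathbf{y})$ is the probability that $X$ started at $\mathbf{x}$ first enters $S$ at the state $\mathbf{y}$. For $j=1,\dots,n-1$, $E_j$ is the set of $\mathbf{r}\in\mathbb{N}^{n-1}$ with $r_i\ge1$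 for $1\le i\le j$, $r_l\ge0$ for $j<l\le n-1$, and at least one of $r_1,\dots,r_j$ equal to $1$. *)

theory Defs
  imports "HOL-Analysis.Analysis"
begin

text \<open>States of the chain on N^(n-1) are functions nat => nat whose coordinates
  1..n-1 carry the entries; all other coordinates are 0.\<close>

definition valid :: "nat \<Rightarrow> (nat \<Rightarrow> nat) \<Rightarrow> bool" where
  "valid n x \<longleftrightarrow> (\<forall>i. i \<notin> {1..n-1} \<longrightarrow> x i = 0)"

definition nzeros :: "nat \<Rightarrow> (nat \<Rightarrow> nat) \<Rightarrow> nat" where
  "nzeros n x = card {i\<in>{1..n-1}. x i = 0}"

definition trans_prob :: "nat \<Rightarrow> nat \<Rightarrow> (nat \<Rightarrow> nat) \<Rightarrow> (nat \<Rightarrow> nat) \<Rightarrow> real" where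
  "trans_prob n k x y =
    (let j = nzeros n x in
     if j = 0 then
       (if y = (\<lambda>i. x i - 1) then (real k - (real n - 1)) / real k else 0)
       + (\<Sum>l\<in>{1..n-1}. if y = x(l := Suc (x l)) then 1 / real k else 0)
     else if j \<le> n - 2 then
       (\<Sum>l\<in>{1..n-1}. if y = x(l := Suc (x l)) then
          (if x l = 0 then (real k - (real n - 1 - real j)) / (real k * real j) else 1 / real k)
        else 0)
     else
       (\<Sum>l\<in>{1..n-1}. if y = x(l := Suc (x l)) then 1 / (real n - 1) else 0))"

text \<open>All possible successors of a state (a finite set containing the support of trans_prob).\<close>
definition succs :: "nat \<Rightarrow> (nat \<Rightarrow> nat) \<Rightarrow> (nat \<Rightarrow> nat) set" where
  "succs n x = insert (\<lambda>i. x i - 1) ((\<lambda>l. x(l := Suc (x l))) ` {1..n-1})"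

definition S_set :: "nat \<Rightarrow> (nat \<Rightarrow> nat) set" where
  "S_set n = {x. valid n x \<and> (\<forall>i\<in>{1..n-1}. 1 \<le> x i)}"

definition Sstar :: "nat \<Rightarrow> (nat \<Rightarrow> nat) set" where
  "Sstar n = {x \<in> S_set n. \<exists>i\<in>{1..n-1}. x i = 1}"

definition E_set :: "nat \<Rightarrow> nat \<Rightarrow> (nat \<Rightarrow> nat) set" where
  "E_set n j = {r. valid n r \<and> (\<forall>i\<in>{1..j}. 1 \<le> r i) \<and> (\<exists>i\<in>{1..j}. r i = 1)}"

definition rsum :: "nat \<Rightarrow> (nat \<Rightarrow> nat) \<Rightarrow> nat" where
  "rsum n r = (\<Sum>i\<in>{1..n-1}. r i)"

text \<open>first_entry n k m x y: probability that X started at x first enters S at time m,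
  and does so at state y.\<close>
primrec first_entry :: "nat \<Rightarrow> nat \<Rightarrow> nat \<Rightarrow> (nat \<Rightarrow> nat) \<Rightarrow> (nat \<Rightarrow> nat) \<Rightarrow> real" where
  "first_entry n k 0 x y = (if x \<in> S_set n \<and> x = y then 1 else 0)"
| "first_entry n k (Suc m) x y =
     (if x \<in> S_set n then 0
      else (\<Sum>z\<in>succs n x. trans_prob n k x z * first_entry n k m z y))"

definition q_star :: "nat \<Rightarrow> nat \<Rightarrow> (nat \<Rightarrow> nat) \<Rightarrow> (nat \<Rightarrow> nat) \<Rightarrow> real" where
  "q_star n k x y = (\<Sum>m. first_entry n k m x y)"

end

theory Submission
  imports Defs
begin

abbreviation incr :: "(nat \<Rightarrow> nat) \<Rightarrow> nat \<Rightarrow> (nat \<Rightarrow> nat)" where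
  "incr z l \<equiv> z(l := Suc (z l))"

definition Zs :: "nat \<Rightarrow> (nat \<Rightarrow> nat) \<Rightarrow> nat set" where
  "Zs n z = {i\<in>{1..n-1}. z i = 0}"

definition pr :: "nat \<Rightarrow> nat \<Rightarrow> (nat \<Rightarrow> nat) \<Rightarrow> nat \<Rightarrow> real" where
  "pr n k z l = (if z l = 0 then real (k - n + 1 + nzeros n z) / (real k * real (nzeros n z)) else 1 / real k)"

lemma nzeros_Zs: "nzeros n z = card (Zs n z)" by (simp add: nzeros_def Zs_def)

lemma finite_Zs[simp]: "finite (Zs n z)" by (simp add: Zs_def)

lemma Zs_sub: "Zs n z \<subseteq> {1..n-1}" by (auto simp: Zs_def)

schematic_goal S_iff: assumes "valid n z" shows "PROP ?P"
proof -
  have S_iff_inner: "z \<in> S_set n \<longleftrightarrow> Zs n z = {}"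
proof
  assume h: "z \<in> S_set n"
  show "Zs n z = {}"
  proof (rule ccontr)
    assume "Zs n z \<noteq> {}" then obtain i where i: "i \<in> {1..n-1}" "z i = 0" by (auto simp: Zs_def)
    from h have "\<forall>i\<in>{1..n-1}. 1 \<le> z i" by (simp add: S_set_def)
    hence "1 \<le> z i" using i(1) by blast
    with i(2) show False by simp
  qed
next
  assume "Zs n z = {}" hence "\<forall>i\<in>{1..n-1}. z i \<noteq> 0" by (auto simp: Zs_def)
  thus "z \<in> S_set n" using assms by (fastforce simp: S_set_def Suc_le_eq)
qed
  show "z \<in> S_set n \<longleftrightarrow> Zs n z = {}" by (fact S_iff_inner)
qed

lemma valid_incr: "valid n z \<Longrightarrow> l \<in> {1..n-1} \<Longrightarrow> valid n (incr z l)"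
  by (auto simp: valid_def)
lemma valid_succs: "valid n z \<Longrightarrow> w \<in> succs n z \<Longrightarrow> valid n w"
  by (auto simp: succs_def valid_def)
lemma Zs_incr: "l \<in> {1..n-1} \<Longrightarrow> Zs n (incr z l) = Zs n z - {l}"
  by (auto simp: Zs_def)
lemma finite_succs[simp]: "finite (succs n z)" by (simp add: succs_def)
lemma incr_succs: "l \<in> {1..n-1} \<Longrightarrow> incr z l \<in> succs n z" by (simp add: succs_def)

schematic_goal tp_eq:
  assumes n3: "3 \<le> n" and nk: "n \<le> k" and v: "valid n z" and nS: "z \<notin> S_set n"
  shows "PROP ?P"
proof -
  have tp_eq_inner: "trans_prob n k z w = (\<Sum>l\<in>{1..n-1}. if w = incr z l then pr n k z l else 0)" for w
proof -
  have ne: "Zs n z \<noteq> {}" using S_iff[OF v] nS by simp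
  hence J0: "nzeros n z \<noteq> 0" by (simp add: nzeros_Zs)
  have Jle: "nzeros n z \<le> n - 1" unfolding nzeros_Zs using card_mono[OF _ Zs_sub] by fastforce
  show ?thesis
  proof (cases "nzeros n z \<le> n - 2")
    case True
    have e: "real k - (real n - 1 - real (nzeros n z)) = real (k - n + 1 + nzeros n z)"
      using nk by (simp add: of_nat_diff)
    show ?thesis unfolding trans_prob_def Let_def using J0 True
      by (auto intro!: sum.cong simp: pr_def e)
  next
    case False
    hence J: "nzeros n z = n - 1" using Jle by simp
    have "Zs n z = {1..n-1}" using card_subset_eq[OF _ Zs_sub] J nzeros_Zs by simp
    hence z0: "\<forall>l\<in>{1..n-1}. z l = 0" by (auto simp: Zs_def)
    have e0: "k - n + 1 + (n - 1) = k" using nk n3 by simp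
    have e: "real (k - n + 1 + (n - 1)) / (real k * real (n - 1)) = 1 / (real n - 1)"
      unfolding e0 using nk n3 by (simp add: of_nat_diff)
    have p: "\<And>l. z l = 0 \<Longrightarrow> pr n k z l = 1/(real n - 1)" unfolding pr_def using J e by simp
    show ?thesis unfolding trans_prob_def Let_def using J0 False
      by (auto intro!: sum.cong simp: p z0)
  qed
qed
  show "\<And>w. trans_prob n k z w = (\<Sum>l\<in>{1..n-1}. if w = incr z l then pr n k z l else 0)" by (fact tp_eq_inner)
qed

schematic_goal tp_sum:
  assumes n3: "3 \<le> n" and nk: "n \<le> k" and v: "valid n z" and nS: "z \<notin> S_set n"
  shows "PROP ?P"
proof -
  have tp_sum_inner: "(\<Sum>w\<in>succs n z. trans_prob n k z w * g w) = (\<Sum>l\<in>{1..n-1}. pr n k z l * g (incr z l))" for g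
proof -
  have "(\<Sum>w\<in>succs n z. trans_prob n k z w * g w)
     = (\<Sum>w\<in>succs n z. \<Sum>l\<in>{1..n-1}. (if w = incr z l then pr n k z l * g w else 0))"
    unfolding tp_eq[OF assms] sum_distrib_right by (intro sum.cong refl) auto
  also have "\<dots> = (\<Sum>l\<in>{1..n-1}. \<Sum>w\<in>succs n z. (if w = incr z l then pr n k z l * g w else 0))"
    by (rule sum.swap)
  also have "\<dots> = (\<Sum>l\<in>{1..n-1}. pr n k z l * g (incr z l))"
    by (rule sum.cong) (auto simp: sum.delta incr_succs)
  finally show ?thesis .
qed
  show "\<And>g. (\<Sum>w\<in>succs n z. trans_prob n k z w * g w) = (\<Sum>l\<in>{1..n-1}. pr n k z l * g (incr z l))" by (fact tp_sum_inner)
qed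

schematic_goal pr_split:
  shows "PROP ?P"
proof -
  have pr_split_inner: "(\<Sum>l\<in>{1..n-1}. pr n k z l * g l) =
   (\<Sum>l\<in>Zs n z. real (k - n + 1 + nzeros n z) / (real k * real (nzeros n z)) * g l)
   + (\<Sum>l\<in>{1..n-1} - Zs n z. 1 / real k * g l)" for n k z g
proof -
  have "(\<Sum>l\<in>{1..n-1}. pr n k z l * g l) = (\<Sum>l\<in>{1..n-1}. if z l = 0 then
     real (k - n + 1 + nzeros n z) / (real k * real (nzeros n z)) * g l else 1/real k * g l)"
    by (auto simp: pr_def intro!: sum.cong)
  also have "\<dots> = (\<Sum>l\<in>{1..n-1} \<inter> {l. z l = 0}. real (k - n + 1 + nzeros n z) / (real k * real (nzeros n z)) * g l)
   + (\<Sum>l\<in>{1..n-1} \<inter> - {l. z l = 0}. 1 / real k * g l)"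
    by (rule sum.If_cases) simp
  also have "{1..n-1} \<inter> {l. z l = 0} = Zs n z" by (auto simp: Zs_def)
  also have "{1..n-1} \<inter> - {l. z l = 0} = {1..n-1} - Zs n z" by (auto simp: Zs_def)
  finally show ?thesis .
qed
  show "\<And>n k z g. (\<Sum>l\<in>{1..n-1}. pr n k z l * g l) =
   (\<Sum>l\<in>Zs n z. real (k - n + 1 + nzeros n z) / (real k * real (nzeros n z)) * g l)
   + (\<Sum>l\<in>{1..n-1} - Zs n z. 1 / real k * g l)" by (fact pr_split_inner)
qed

lemma card_Zs_le: "nzeros n z \<le> n - 1"
  unfolding nzeros_Zs using card_mono[OF _ Zs_sub] by fastforce

schematic_goal pr_sum:
  assumes n3: "3 \<le> n" and nk: "n \<le> k" and v: "valid n z" and nS: "z \<notin> S_set n"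
  shows "PROP ?P"
proof -
  have pr_sum_inner: "(\<Sum>l\<in>{1..n-1}. pr n k z l) = 1"
proof -
  have ne: "Zs n z \<noteq> {}" using S_iff[OF v] nS by simp
  hence J0: "nzeros n z \<noteq> 0" by (simp add: nzeros_Zs)
  have cd: "card ({1..n-1} - Zs n z) = n - 1 - nzeros n z"
    using card_Diff_subset[OF finite_Zs Zs_sub, of n z] by (simp add: nzeros_Zs)
  have "(\<Sum>l\<in>{1..n-1}. pr n k z l) = (\<Sum>l\<in>{1..n-1}. pr n k z l * 1)" by simp
  also have "\<dots> = (\<Sum>l\<in>Zs n z. real (k - n + 1 + nzeros n z) / (real k * real (nzeros n z)) * 1)
   + (\<Sum>l\<in>{1..n-1} - Zs n z. 1 / real k * 1)" by (rule pr_split)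
  also have "\<dots> = real (nzeros n z) * (real (k - n + 1 + nzeros n z) / (real k * real (nzeros n z)))
     + real (n - 1 - nzeros n z) * (1 / real k)"
    by (simp only: mult_1_right sum_constant cd nzeros_Zs)
  also have "\<dots> = 1" using J0 nk n3 card_Zs_le[of n z]
    by (simp add: of_nat_diff field_simps)
  finally show ?thesis .
qed
  show "(\<Sum>l\<in>{1..n-1}. pr n k z l) = 1" by (fact pr_sum_inner)
qed

lemma tp_nonneg: "3 \<le> n \<Longrightarrow> n \<le> k \<Longrightarrow> 0 \<le> trans_prob n k z w"
  unfolding trans_prob_def Let_def
  by (auto intro!: sum_nonneg add_nonneg_nonneg divide_nonneg_nonneg mult_nonneg_nonneg)

lemma pr_nonneg: "0 \<le> pr n k z l" by (simp add: pr_def)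

lemma fe_nonneg: "3 \<le> n \<Longrightarrow> n \<le> k \<Longrightarrow> 0 \<le> first_entry n k m z y"
  by (induction m arbitrary: z) (auto intro!: sum_nonneg mult_nonneg_nonneg tp_nonneg)

lemma fe_S: "z \<in> S_set n \<Longrightarrow> first_entry n k m z y = (if m = 0 \<and> y = z then 1 else 0)"
  by (cases m) auto

lemma fe_Suc: "3 \<le> n \<Longrightarrow> n \<le> k \<Longrightarrow> valid n z \<Longrightarrow> z \<notin> S_set n \<Longrightarrow>
  first_entry n k (Suc m) z y = (\<Sum>l\<in>{1..n-1}. pr n k z l * first_entry n k m (incr z l) y)"
  by (simp add: tp_sum)

lemma rsum_remove: "l \<in> {1..n-1} \<Longrightarrow> rsum n r = r l + (\<Sum>i\<in>{1..n-1}-{l}. r i)"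
  unfolding rsum_def by (simp add: sum.remove)

schematic_goal fe_support_s:
  fixes n k :: nat
 
  assumes n3: "3 \<le> n" and nk: "n \<le> k"
  shows "PROP ?P"
proof -
  have fe_support_s_inner: "valid n z \<Longrightarrow> first_entry n k m z y \<noteq> 0 \<Longrightarrow>
    (\<forall>i. z i \<le> y i) \<and> y \<in> S_set n \<and> rsum n (\<lambda>i. y i - z i) = m
     \<and> (z \<notin> S_set n \<longrightarrow> (\<exists>l\<in>Zs n z. y l = 1))" for z m y
proof (induction m arbitrary: z)
  case 0
  then show ?case by (auto simp: rsum_def split: if_splits)
next
  case (Suc m)
  have nS: "z \<notin> S_set n" using Suc.prems by (auto split: if_splits)
  have "(\<Sum>l\<in>{1..n-1}. pr n k z l * first_entry n k m (incr z l) y) \<noteq> 0"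
    using Suc.prems fe_Suc[OF n3 nk Suc.prems(1) nS] by simp
  then obtain l where l: "l \<in> {1..n-1}" and ne: "pr n k z l * first_entry n k m (incr z l) y \<noteq> 0"
    by (meson sum.not_neutral_contains_not_neutral)
  let ?w = "incr z l"
  have vw: "valid n ?w" using valid_incr Suc.prems(1) l by blast
  have fw: "first_entry n k m ?w y \<noteq> 0" using ne by simp
  note IH = Suc.IH[OF vw fw]
  have le: "\<forall>i. z i \<le> y i"
  proof
    fix i show "z i \<le> y i" using IH[THEN conjunct1, rule_format, of i] by (cases "i = l") auto
  qed
  have rs: "rsum n (\<lambda>i. y i - z i) = Suc m"
  proof -
    have a: "rsum n (\<lambda>i. y i - ?w i) = m" using IH by blast
    have yl: "y l - z l = Suc (y l - ?w l)" using IH[THEN conjunct1, rule_format, of l] by simp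
    have "rsum n (\<lambda>i. y i - z i) = (y l - z l) + (\<Sum>i\<in>{1..n-1}-{l}. y i - z i)"
      by (rule rsum_remove[OF l])
    also have "(\<Sum>i\<in>{1..n-1}-{l}. y i - z i) = (\<Sum>i\<in>{1..n-1}-{l}. y i - ?w i)"
      by (rule sum.cong) auto
    also have "(y l - z l) + \<dots> = Suc (rsum n (\<lambda>i. y i - ?w i))"
      unfolding yl rsum_remove[OF l, of "\<lambda>i. y i - ?w i"] by simp
    finally show ?thesis using a by simp
  qed
  have ex: "\<exists>l\<in>Zs n z. y l = 1"
  proof (cases "?w \<in> S_set n")
    case True
    then have my: "m = 0 \<and> y = ?w" using fw fe_S[OF True] by (auto split: if_splits)
    have "Zs n z - {l} = {}" using S_iff[OF vw] True Zs_incr[OF l] by simp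
    moreover have "Zs n z \<noteq> {}" using S_iff[OF Suc.prems(1)] nS by simp
    ultimately have "l \<in> Zs n z" by blast
    then show ?thesis using my by (auto simp: Zs_def)
  next
    case False
    then obtain l' where "l' \<in> Zs n ?w" "y l' = 1" using IH by blast
    then show ?thesis using Zs_incr[OF l] by auto
  qed
  show ?case using le IH rs ex by blast
qed
  show "\<And>z m y. (valid n z) \<longrightarrow> (first_entry n k m z y \<noteq> 0) \<longrightarrow> ((\<forall>i. z i \<le> y i) \<and> y \<in> S_set n \<and> rsum n (\<lambda>i. y i - z i) = m
     \<and> (z \<notin> S_set n \<longrightarrow> (\<exists>l\<in>Zs n z. y l = 1)))" using fe_support_s_inner by blast
qed

lemma fe_support:
  fixes n k :: nat
 
  assumes n3: "3 \<le> n" and nk: "n \<le> k"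
  shows "valid n z \<Longrightarrow> first_entry n k m z y \<noteq> 0 \<Longrightarrow>
    (\<forall>i. z i \<le> y i) \<and> y \<in> S_set n \<and> rsum n (\<lambda>i. y i - z i) = m
     \<and> (z \<notin> S_set n \<longrightarrow> (\<exists>l\<in>Zs n z. y l = 1))"
  using fe_support_s[OF assms] by blast

definition coef :: "nat \<Rightarrow> nat \<Rightarrow> nat \<Rightarrow> real" where
  "coef n k J = real ((k - n + 1 + J) choose J)"
definition PP :: "nat \<Rightarrow> (nat \<Rightarrow> nat) \<Rightarrow> real" where
  "PP n r = (\<Prod>i\<in>{1..n-1}. fact (r i))"
definition cnt :: "(nat \<Rightarrow> nat) \<Rightarrow> nat set \<Rightarrow> real" where
  "cnt r Z = (\<Sum>i\<in>Z. if r i = 1 then 1 else 0)"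

lemma PP_pos: "0 < PP n r" unfolding PP_def by (intro prod_pos) auto

schematic_goal PP_remove:
  fixes l n :: nat and r :: "nat \<Rightarrow> nat"
  assumes l: "l \<in> {1..n-1}" and r: "1 \<le> r l"
  shows "PROP ?P"
proof -
  have PP_remove_inner: "PP n r = real (r l) * PP n (r(l := r l - 1))"
proof -
  have a: "PP n r = fact (r l) * (\<Prod>i\<in>{1..n-1}-{l}. fact (r i))"
    unfolding PP_def by (rule prod.remove) (use l in auto)
  have b: "(\<Prod>i\<in>{1..n-1}-{l}. fact (r i)) = (\<Prod>i\<in>{1..n-1}-{l}. fact ((r(l := r l - 1)) i) :: real)"
    by (rule prod.cong) auto
  have c: "fact (r l) = real (r l) * (fact (r l - 1) :: real)" using r by (simp add: fact_reduce)
  have d: "PP n (r(l := r l - 1)) = fact ((r(l := r l - 1)) l) * (\<Prod>i\<in>{1..n-1}-{l}. fact ((r(l := r l - 1)) i))"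
    unfolding PP_def by (rule prod.remove) (use l in auto)
  show ?thesis using a b c d by simp
qed
  show "PP n r = real (r l) * PP n (r(l := r l - 1))" by (fact PP_remove_inner)
qed

schematic_goal coef_rel:
  fixes J :: nat
  assumes "1 \<le> J" shows "PROP ?P"
proof -
  have coef_rel_inner: "real J * coef n k J = real (k - n + 1 + J) * coef n k (J - 1)" for n k
proof -
  obtain j where J: "J = Suc j" using assms by (cases J) auto
  have e1: "k - n + 1 + Suc j = Suc (k - n + 1 + j)" by simp
  have e2: "Suc j - 1 = j" by simp
  show ?thesis unfolding coef_def J e1 e2 by (metis of_nat_mult Suc_times_binomial)
qed
  show "\<And>n k. real J * coef n k J = real (k - n + 1 + J) * coef n k (J - 1)" by (fact coef_rel_inner)
qed

lemma sum_restrict_sub: "finite A \<Longrightarrow> B \<subseteq> A \<Longrightarrow> (\<Sum>l\<in>A. if l \<in> B then g l else 0) = (\<Sum>l\<in>B. g l)"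
  by (simp add: sum.inter_restrict[symmetric] Int_absorb1)

schematic_goal fe_val_s:
  fixes n k :: nat
 
  assumes n3: "3 \<le> n" and nk: "n \<le> k"
  shows "PROP ?P"
proof -
  have fe_val_s_inner: "valid n z \<Longrightarrow> z \<notin> S_set n \<Longrightarrow> valid n r \<Longrightarrow> \<forall>i\<in>Zs n z. 1 \<le> r i \<Longrightarrow> rsum n r = m \<Longrightarrow>
    first_entry n k m z (\<lambda>i. z i + r i) = coef n k (nzeros n z) / real k ^ m * fact (m - 1) / PP n r * cnt r (Zs n z)" for z r m
proof (induction m arbitrary: z r)
  case 0
  obtain i where i: "i \<in> Zs n z" using S_iff[OF "0.prems"(1)] "0.prems"(2) by auto
  have "i \<in> {1..n-1}" using i Zs_sub[of n z] by blast
  hence "r i \<le> rsum n r" unfolding rsum_def by (intro member_le_sum) auto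
  with "0.prems" i show ?case by auto
next
  case (Suc m)
  note IH = Suc.IH
  note v = Suc.prems(1) and nS = Suc.prems(2) and vr = Suc.prems(3) and rZ = Suc.prems(4) and rs = Suc.prems(5)
  define y where "y = (\<lambda>i. z i + r i)"
  define Z where "Z = Zs n z"
  define J where "J = nzeros n z"
  have JZ: "J = card Z" by (simp add: J_def Z_def nzeros_Zs)
  have Zne: "Z \<noteq> {}" using S_iff[OF v] nS Z_def by simp
  have J1: "1 \<le> J" using Zne JZ by (simp add: Suc_le_eq card_gt_0_iff Z_def)
  have ZI: "Z \<subseteq> {1..n-1}" using Zs_sub Z_def by simp
  have kpos: "0 < k" using nk n3 by simp
  have fe1: "first_entry n k (Suc m) z y = (\<Sum>l\<in>{1..n-1}. pr n k z l * first_entry n k m (incr z l) y)"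
    by (rule fe_Suc[OF n3 nk v nS])
  show ?case
  proof (cases m)
    case 0
    obtain l0 where l0: "l0 \<in> Z" using Zne by auto
    have l0I: "l0 \<in> {1..n-1}" using l0 ZI by auto
    have "rsum n r = r l0 + (\<Sum>i\<in>{1..n-1}-{l0}. r i)" by (rule rsum_remove[OF l0I])
    hence "r l0 + (\<Sum>i\<in>{1..n-1}-{l0}. r i) = 1" using rs 0 by simp
    moreover have "1 \<le> r l0" using rZ l0 Z_def by auto
    ultimately have rl0: "r l0 = 1" and ro: "(\<Sum>i\<in>{1..n-1}-{l0}. r i) = 0" by linarith+
    have r0: "\<And>i. i \<in> {1..n-1} \<Longrightarrow> i \<noteq> l0 \<Longrightarrow> r i = 0" using ro by simp
    have Zl0: "Z = {l0}"
    proof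
      show "Z \<subseteq> {l0}"
      proof
        fix i assume i: "i \<in> Z"
        hence "1 \<le> r i" "i \<in> {1..n-1}" using rZ Z_def ZI by auto
        thus "i \<in> {l0}" using r0 by force
      qed
    qed (use l0 in auto)
    have rfun: "\<And>i. r i = (if i = l0 then 1 else 0)"
    proof -
      fix i show "r i = (if i = l0 then 1 else 0)"
        using vr r0[of i] rl0 by (cases "i \<in> {1..n-1}") (auto simp: valid_def)
    qed
    have zl0: "z l0 = 0" using l0 Z_def by (simp add: Zs_def)
    have yeq: "y = incr z l0" unfolding y_def by (rule ext) (simp add: rfun zl0)
    have wS: "incr z l0 \<in> S_set n" using S_iff[OF valid_incr[OF v l0I]] Zs_incr[OF l0I] Zl0 Z_def by simp
    have terms: "(\<Sum>l\<in>{1..n-1}. pr n k z l * first_entry n k 0 (incr z l) y) = pr n k z l0"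
    proof -
      have "(\<Sum>l\<in>{1..n-1}. pr n k z l * first_entry n k 0 (incr z l) y) = (\<Sum>l\<in>{1..n-1}. if l = l0 then pr n k z l0 else 0)"
      proof (rule sum.cong[OF refl])
        fix l assume l: "l \<in> {1..n-1}"
        show "pr n k z l * first_entry n k 0 (incr z l) y = (if l = l0 then pr n k z l0 else 0)"
        proof (cases "l = l0")
          case True thus ?thesis using yeq wS by simp
        next
          case False
          have "incr z l \<noteq> y"
          proof
            assume "incr z l = y" hence "incr z l l = y l" by simp
            thus False using r0[OF l False] y_def by simp
          qed
          thus ?thesis using False by simp
        qed
      qed
      also have "\<dots> = pr n k z l0" using l0I by simp
      finally show ?thesis .
    qed
    have PP1: "PP n r = 1" unfolding PP_def by (rule prod.neutral) (auto simp: rfun)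
    have cnt1: "cnt r Z = 1" unfolding cnt_def Zl0 using rl0 by simp
    have J1': "J = 1" using JZ Zl0 by simp
    have pl0: "pr n k z l0 = real (k - n + 1 + 1) / real k" using zl0 J1' J_def by (simp add: pr_def)
    show ?thesis using fe1 terms pl0 PP1 cnt1 J1' 0
      by (simp add: y_def J_def Z_def coef_def)
  next
    case (Suc m')
    define c' where "c' l = (if l \<in> Z then cnt r Z - (if r l = 1 then (1::real) else 0) else cnt r Z)" for l
    have trm: "pr n k z l * first_entry n k m (incr z l) y
       = coef n k J / real k ^ Suc m * fact (m - 1) / PP n r * (real (r l) * c' l)"
      if l: "l \<in> {1..n-1}" for l
    proof (cases "r l = 0")
      case True
      have "first_entry n k m (incr z l) y = 0"
      proof (rule ccontr)
        assume "first_entry n k m (incr z l) y \<noteq> 0"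
        from fe_support[OF n3 nk valid_incr[OF v l] this] have "incr z l l \<le> y l" by blast
        thus False using True y_def by simp
      qed
      thus ?thesis using True by simp
    next
      case False
      hence rl: "1 \<le> r l" by simp
      define R where "R = r(l := r l - 1)"
      define w where "w = incr z l"
      have yw: "y = (\<lambda>i. w i + R i)" unfolding y_def w_def R_def by (rule ext) (use rl in auto)
      have vw: "valid n w" unfolding w_def by (rule valid_incr[OF v l])
      have vR: "valid n R" using vr l unfolding R_def valid_def by auto
      have PPr: "PP n r = real (r l) * PP n R" unfolding R_def by (rule PP_remove[of l n r, OF l rl])
      have rsR: "rsum n R = m"
      proof -
        have "rsum n R = R l + (\<Sum>i\<in>{1..n-1}-{l}. R i)" by (rule rsum_remove[OF l])
        also have "(\<Sum>i\<in>{1..n-1}-{l}. R i) = (\<Sum>i\<in>{1..n-1}-{l}. r i)" unfolding R_def by (rule sum.cong) auto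
        finally have a: "rsum n R = R l + (\<Sum>i\<in>{1..n-1}-{l}. r i)" .
        have c: "R l = r l - 1" unfolding R_def by simp
        show ?thesis using a c rsum_remove[OF l, of r] rs rl by linarith
      qed
      have PPRpos: "0 < PP n R" by (rule PP_pos)
      have rlpos: "0 < real (r l)" using rl by simp
      show ?thesis
      proof (cases "w \<in> S_set n")
        case True
        have fe0: "first_entry n k m w y = 0" unfolding Suc using True by simp
        have "Z - {l} = {}" using S_iff[OF vw] True Zs_incr[OF l] Z_def w_def by simp
        hence Zl: "Z = {l}" using Zne by blast
        have "c' l = 0" unfolding c'_def Zl cnt_def by simp
        thus ?thesis using fe0 w_def by simp
      next
        case False
        have ZsW: "Zs n w = Z - {l}" using Zs_incr[OF l] Z_def w_def by simp
        have rZw: "\<forall>i\<in>Zs n w. 1 \<le> R i" using rZ ZsW Z_def R_def by auto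
        have IHw: "first_entry n k m w y = coef n k (nzeros n w) / real k ^ m * fact (m - 1) / PP n R * cnt R (Zs n w)"
          unfolding yw by (rule IH[OF vw False vR rZw rsR])
        show ?thesis
        proof (cases "l \<in> Z")
          case True
          have zl: "z l = 0" using True Z_def by (simp add: Zs_def)
          have Jw: "nzeros n w = J - 1" using ZsW True JZ by (simp add: nzeros_Zs)
          have cR: "cnt R (Zs n w) = c' l"
          proof -
            have "cnt R (Zs n w) = cnt r (Z - {l})" unfolding ZsW cnt_def R_def by (rule sum.cong) auto
            also have "\<dots> = c' l" unfolding cnt_def c'_def using True Z_def by (simp add: sum_diff1)
            finally show ?thesis .
          qed
          have pl: "pr n k z l = real (k - n + 1 + J) / (real k * real J)" using zl J_def by (simp add: pr_def)
          have cJ: "coef n k J = real (k - n + 1 + J) * coef n k (J - 1) / real J"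
            using coef_rel[OF J1, of n k] J1 by (simp add: field_simps)
          show ?thesis unfolding w_def[symmetric] IHw Jw cR pl cJ PPr using J1 kpos PPRpos rlpos
            by (simp add: field_simps)
        next
          case False
          have zl: "z l \<noteq> 0" using False l Z_def by (simp add: Zs_def)
          have ZsW': "Zs n w = Z" using ZsW False by simp
          have Jw: "nzeros n w = J" using ZsW' JZ by (simp add: nzeros_Zs)
          have cR: "cnt R (Zs n w) = c' l"
          proof -
            have "cnt R (Zs n w) = cnt r Z" unfolding ZsW' cnt_def R_def by (rule sum.cong) (use False in auto)
            thus ?thesis unfolding c'_def using False by simp
          qed
          have pl: "pr n k z l = 1 / real k" using zl by (simp add: pr_def)
          show ?thesis unfolding w_def[symmetric] IHw Jw cR pl PPr using J1 kpos PPRpos rlpos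
            by (simp add: field_simps)
        qed
      qed
    qed
    have sumc: "(\<Sum>l\<in>{1..n-1}. real (r l) * c' l) = real m * cnt r Z"
    proof -
      have "(\<Sum>l\<in>{1..n-1}. real (r l) * c' l)
          = (\<Sum>l\<in>{1..n-1}. real (r l) * cnt r Z - (if l \<in> Z then (if r l = 1 then (1::real) else 0) else 0))"
        by (rule sum.cong) (auto simp: c'_def algebra_simps)
      also have "\<dots> = (\<Sum>l\<in>{1..n-1}. real (r l)) * cnt r Z - (\<Sum>l\<in>{1..n-1}. (if l \<in> Z then (if r l = 1 then (1::real) else 0) else 0))"
        by (simp add: sum_subtractf sum_distrib_right)
      also have "(\<Sum>l\<in>{1..n-1}. (if l \<in> Z then (if r l = 1 then (1::real) else 0) else 0)) = cnt r Z"
      proof -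
        have "(\<Sum>l\<in>{1..n-1}. (if l \<in> Z then (if r l = 1 then (1::real) else 0) else 0)) = (\<Sum>l\<in>Z. (if r l = 1 then (1::real) else 0))"
          by (rule sum_restrict_sub[OF _ ZI]) simp
        thus ?thesis by (simp add: cnt_def)
      qed
      also have "(\<Sum>l\<in>{1..n-1}. real (r l)) = real (Suc m)" using rs unfolding rsum_def by (simp flip: of_nat_sum)
      finally show ?thesis by (simp add: algebra_simps)
    qed
    have "first_entry n k (Suc m) z y = (\<Sum>l\<in>{1..n-1}. coef n k J / real k ^ Suc m * fact (m - 1) / PP n r * (real (r l) * c' l))"
      unfolding fe1 by (rule sum.cong) (simp_all add: trm)
    also have "\<dots> = coef n k J / real k ^ Suc m * fact (m - 1) / PP n r * (real m * cnt r Z)"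
      unfolding sum_distrib_left[symmetric] sumc by (rule refl)
    also have "\<dots> = coef n k J / real k ^ Suc m * fact (Suc m - 1) / PP n r * cnt r Z"
      using Suc by (simp add: fact_reduce[of m])
    finally show ?thesis by (simp add: y_def J_def Z_def)
  qed
qed
  show "\<And>z r m. (valid n z) \<longrightarrow> (z \<notin> S_set n) \<longrightarrow> (valid n r) \<longrightarrow> (\<forall>i\<in>Zs n z. 1 \<le> r i) \<longrightarrow> (rsum n r = m) \<longrightarrow> (first_entry n k m z (\<lambda>i. z i + r i) = coef n k (nzeros n z) / real k ^ m * fact (m - 1) / PP n r * cnt r (Zs n z))" using fe_val_s_inner by blast
qed

lemma fe_val:
  fixes n k :: nat
 
  assumes n3: "3 \<le> n" and nk: "n \<le> k"
  shows "valid n z \<Longrightarrow> z \<notin> S_set n \<Longrightarrow> valid n r \<Longrightarrow> \<forall>i\<in>Zs n z. 1 \<le> r i \<Longrightarrow> rsum n r = m \<Longrightarrow>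
    first_entry n k m z (\<lambda>i. z i + r i) = coef n k (nzeros n z) / real k ^ m * fact (m - 1) / PP n r * cnt r (Zs n z)"
  using fe_val_s[OF assms] by blast

primrec Hm :: "nat \<Rightarrow> nat \<Rightarrow> nat \<Rightarrow> (nat \<Rightarrow> nat) \<Rightarrow> real" where
  "Hm n k 0 z = (if z \<in> S_set n then 1 else 0)"
| "Hm n k (Suc m) z = (if z \<in> S_set n then 0 else (\<Sum>w\<in>succs n z. trans_prob n k z w * Hm n k m w))"

primrec Um :: "nat \<Rightarrow> nat \<Rightarrow> nat \<Rightarrow> (nat \<Rightarrow> nat) \<Rightarrow> real" where
  "Um n k 0 z = (if z \<in> S_set n then 0 else 1)"
| "Um n k (Suc m) z = (if z \<in> S_set n then 0 else (\<Sum>w\<in>succs n z. trans_prob n k z w * Um n k m w))"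

lemma Um_nonneg: "3 \<le> n \<Longrightarrow> n \<le> k \<Longrightarrow> 0 \<le> Um n k m z"
  by (induction m arbitrary: z) (auto intro!: sum_nonneg mult_nonneg_nonneg tp_nonneg)

schematic_goal HB_s:
  fixes n k :: nat
 
  assumes n3: "3 \<le> n" and nk: "n \<le> k"
  shows "PROP ?P"
proof -
  have HB_s_inner: "finite B \<Longrightarrow> (\<forall>y. first_entry n k m z y \<noteq> 0 \<longrightarrow> y \<in> B) \<Longrightarrow>
    (\<Sum>y\<in>B. first_entry n k m z y) = Hm n k m z" for B m z
proof (induction m arbitrary: z)
  case 0
  show ?case
  proof (cases "z \<in> S_set n")
    case True
    hence "z \<in> B" using "0.prems"(2) by (auto split: if_splits)
    thus ?thesis using True "0.prems"(1) by (simp add: sum.delta)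
  next
    case False thus ?thesis by simp
  qed
next
  case (Suc m)
  show ?case
  proof (cases "z \<in> S_set n")
    case True thus ?thesis by simp
  next
    case False
    have "(\<Sum>y\<in>B. first_entry n k (Suc m) z y) = (\<Sum>y\<in>B. \<Sum>w\<in>succs n z. trans_prob n k z w * first_entry n k m w y)"
      using False by simp
    also have "\<dots> = (\<Sum>w\<in>succs n z. \<Sum>y\<in>B. trans_prob n k z w * first_entry n k m w y)" by (rule sum.swap)
    also have "\<dots> = (\<Sum>w\<in>succs n z. trans_prob n k z w * Hm n k m w)"
    proof (rule sum.cong[OF refl])
      fix w assume w: "w \<in> succs n z"
      show "(\<Sum>y\<in>B. trans_prob n k z w * first_entry n k m w y) = trans_prob n k z w * Hm n k m w"
      proof (cases "trans_prob n k z w = 0")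
        case True thus ?thesis by simp
      next
        case tne: False
        have "\<forall>y. first_entry n k m w y \<noteq> 0 \<longrightarrow> y \<in> B"
        proof (intro allI impI)
          fix y assume ne: "first_entry n k m w y \<noteq> 0"
          have "0 < trans_prob n k z w * first_entry n k m w y"
            using tne ne tp_nonneg[OF n3 nk, of z w] fe_nonneg[OF n3 nk, of m w y]
            by (simp add: less_le)
          also have "\<dots> \<le> (\<Sum>w\<in>succs n z. trans_prob n k z w * first_entry n k m w y)"
            by (rule member_le_sum[OF w]) (auto intro!: mult_nonneg_nonneg tp_nonneg[OF n3 nk] fe_nonneg[OF n3 nk])
          also have "\<dots> = first_entry n k (Suc m) z y" using False by simp
          finally show "y \<in> B" using Suc.prems(2) by auto
        qed
        hence "(\<Sum>y\<in>B. first_entry n k m w y) = Hm n k m w" by (rule Suc.IH[OF Suc.prems(1)])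
        thus ?thesis by (simp add: sum_distrib_left[symmetric])
      qed
    qed
    also have "\<dots> = Hm n k (Suc m) z" using False by simp
    finally show ?thesis .
  qed
qed
  show "\<And>B m z. (finite B) \<longrightarrow> ((\<forall>y. first_entry n k m z y \<noteq> 0 \<longrightarrow> y \<in> B)) \<longrightarrow> ((\<Sum>y\<in>B. first_entry n k m z y) = Hm n k m z)" using HB_s_inner by blast
qed

lemma HB:
  fixes n k :: nat
 
  assumes n3: "3 \<le> n" and nk: "n \<le> k"
  shows "finite B \<Longrightarrow> (\<forall>y. first_entry n k m z y \<noteq> 0 \<longrightarrow> y \<in> B) \<Longrightarrow>
    (\<Sum>y\<in>B. first_entry n k m z y) = Hm n k m z"
  using HB_s[OF assms] by blast

lemma Hm_nonneg: "3 \<le> n \<Longrightarrow> n \<le> k \<Longrightarrow> 0 \<le> Hm n k m z"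
  by (induction m arbitrary: z) (auto intro!: sum_nonneg mult_nonneg_nonneg tp_nonneg)

schematic_goal mass_s:
  fixes n k :: nat
 
  assumes n3: "3 \<le> n" and nk: "n \<le> k"
  shows "PROP ?P"
proof -
  have mass_s_inner: "valid n z \<Longrightarrow> (\<Sum>i\<le>m. Hm n k i z) + Um n k m z = 1" for z m
proof (induction m arbitrary: z)
  case 0
  then show ?case by simp
next
  case (Suc m)
  show ?case
  proof (cases "z \<in> S_set n")
    case True
    have "Um n k m z = 0" using True by (cases m) auto
    thus ?thesis using True Suc.IH[OF Suc.prems] by simp
  next
    case False
    have a: "(\<Sum>i\<le>Suc m. Hm n k i z) = (\<Sum>i\<le>m. \<Sum>w\<in>succs n z. trans_prob n k z w * Hm n k i w)"
      unfolding sum.atMost_Suc_shift using False by simp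
    also have "\<dots> = (\<Sum>w\<in>succs n z. \<Sum>i\<le>m. trans_prob n k z w * Hm n k i w)" by (rule sum.swap)
    also have "\<dots> = (\<Sum>w\<in>succs n z. trans_prob n k z w * (\<Sum>i\<le>m. Hm n k i w))" by (simp add: sum_distrib_left)
    finally have a: "(\<Sum>i\<le>Suc m. Hm n k i z) = (\<Sum>w\<in>succs n z. trans_prob n k z w * (\<Sum>i\<le>m. Hm n k i w))" .
    have "(\<Sum>i\<le>Suc m. Hm n k i z) + Um n k (Suc m) z
       = (\<Sum>w\<in>succs n z. trans_prob n k z w * ((\<Sum>i\<le>m. Hm n k i w) + Um n k m w))"
      unfolding a using False by (simp add: sum.distrib distrib_left)
    also have "\<dots> = (\<Sum>w\<in>succs n z. trans_prob n k z w * 1)"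
      by (rule sum.cong[OF refl]) (simp add: Suc.IH[OF valid_succs[OF Suc.prems]])
    also have "\<dots> = (\<Sum>l\<in>{1..n-1}. pr n k z l * 1)" by (rule tp_sum[OF n3 nk Suc.prems False])
    also have "\<dots> = 1" using pr_sum[OF n3 nk Suc.prems False] by simp
    finally show ?thesis .
  qed
qed
  show "\<And>z m. (valid n z) \<longrightarrow> ((\<Sum>i\<le>m. Hm n k i z) + Um n k m z = 1)" using mass_s_inner by blast
qed

lemma mass:
  fixes n k :: nat
 
  assumes n3: "3 \<le> n" and nk: "n \<le> k"
  shows "valid n z \<Longrightarrow> (\<Sum>i\<le>m. Hm n k i z) + Um n k m z = 1"
  using mass_s[OF assms] by blast

schematic_goal Um_bound_s:
  fixes n k :: nat
 
  assumes n3: "3 \<le> n" and nk: "n \<le> k"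
  shows "PROP ?P"
proof -
  have Um_bound_s_inner: "valid n z \<Longrightarrow> Um n k m z \<le> (1 - 1 / (2 * real k)) ^ m * 2 ^ nzeros n z" for z m
proof (induction m arbitrary: z)
  case 0
  have "(1::real) \<le> 2 ^ nzeros n z" by simp
  thus ?case by simp
next
  case (Suc m)
  define \<rho> where "\<rho> = 1 - 1 / (2 * real k)"
  have kpos: "0 < k" using n3 nk by simp
  have rho0: "0 \<le> \<rho>" unfolding \<rho>_def using kpos by (simp add: field_simps)
  show ?case
  proof (cases "z \<in> S_set n")
    case True thus ?thesis using rho0 \<rho>_def by simp
  next
    case False
    define J where "J = nzeros n z"
    have ne: "Zs n z \<noteq> {}" using S_iff[OF Suc.prems] False by simp
    hence J1: "1 \<le> J" unfolding J_def nzeros_Zs by (simp add: Suc_le_eq card_gt_0_iff)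
    have Jle: "J \<le> n - 1" unfolding J_def by (rule card_Zs_le)
    have cd: "card ({1..n-1} - Zs n z) = n - 1 - J"
      using card_Diff_subset[OF finite_Zs Zs_sub, of n z] by (simp add: nzeros_Zs J_def)
    define q where "q = \<rho> ^ m"
    define u where "u = (2::real) ^ (J - 1)"
    have q0: "0 \<le> q" unfolding q_def using rho0 by simp
    have u0: "0 < u" unfolding u_def by simp
    have u2: "(2::real) ^ J = 2 * u" unfolding u_def using J1 by (simp add: power_eq_if)
    have "Um n k (Suc m) z = (\<Sum>l\<in>{1..n-1}. pr n k z l * Um n k m (incr z l))"
      using False tp_sum[OF n3 nk Suc.prems False] by simp
    also have "\<dots> \<le> (\<Sum>l\<in>{1..n-1}. pr n k z l * (q * 2 ^ nzeros n (incr z l)))"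
      by (rule sum_mono, rule mult_left_mono) (auto simp: q_def \<rho>_def intro!: Suc.IH valid_incr[OF Suc.prems] pr_nonneg)
    also have "\<dots> = (\<Sum>l\<in>Zs n z. real (k - n + 1 + J) / (real k * real J) * (q * u))
       + (\<Sum>l\<in>{1..n-1} - Zs n z. 1 / real k * (q * (2 * u)))"
    proof -
      have "(\<Sum>l\<in>{1..n-1}. pr n k z l * (q * 2 ^ nzeros n (incr z l)))
        = (\<Sum>l\<in>Zs n z. real (k - n + 1 + J) / (real k * real J) * (q * 2 ^ nzeros n (incr z l)))
        + (\<Sum>l\<in>{1..n-1} - Zs n z. 1 / real k * (q * 2 ^ nzeros n (incr z l)))"
        unfolding J_def by (rule pr_split)
      also have "(\<Sum>l\<in>Zs n z. real (k - n + 1 + J) / (real k * real J) * (q * 2 ^ nzeros n (incr z l)))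
          = (\<Sum>l\<in>Zs n z. real (k - n + 1 + J) / (real k * real J) * (q * u))"
      proof (rule sum.cong[OF refl])
        fix l assume l: "l \<in> Zs n z"
        hence "nzeros n (incr z l) = J - 1" using Zs_incr[of l n z] Zs_sub[of n z]
          by (auto simp: nzeros_Zs J_def)
        thus "real (k - n + 1 + J) / (real k * real J) * (q * 2 ^ nzeros n (incr z l))
            = real (k - n + 1 + J) / (real k * real J) * (q * u)" by (simp add: u_def)
      qed
      also have "(\<Sum>l\<in>{1..n-1} - Zs n z. 1 / real k * (q * 2 ^ nzeros n (incr z l)))
          = (\<Sum>l\<in>{1..n-1} - Zs n z. 1 / real k * (q * (2 * u)))"
      proof (rule sum.cong[OF refl])
        fix l assume l: "l \<in> {1..n-1} - Zs n z"
        hence "nzeros n (incr z l) = J" using Zs_incr[of l n z]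
          by (auto simp: nzeros_Zs J_def)
        thus "1 / real k * (q * 2 ^ nzeros n (incr z l)) = 1 / real k * (q * (2 * u))" by (simp add: u2)
      qed
      finally show ?thesis .
    qed
    also have "\<dots> = real J * (real (k - n + 1 + J) / (real k * real J) * (q * u))
       + real (n - 1 - J) * (1 / real k * (q * (2 * u)))"
      by (simp only: sum_constant cd nzeros_Zs J_def)
    also have "\<dots> = q * u * (real k + real n - 1 - real J) / real k"
      using J1 Jle nk n3 kpos by (simp add: of_nat_diff field_simps)
    also have "\<dots> \<le> q * u * (2 * real k - 1) / real k"
      using q0 u0 kpos nk by (intro divide_right_mono mult_left_mono) auto
    also have "\<dots> = \<rho> ^ Suc m * 2 ^ nzeros n z"
      unfolding q_def \<rho>_def J_def[symmetric] u2 using kpos by (simp add: field_simps)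
    finally show ?thesis unfolding \<rho>_def .
  qed
qed
  show "\<And>z m. (valid n z) \<longrightarrow> (Um n k m z \<le> (1 - 1 / (2 * real k)) ^ m * 2 ^ nzeros n z)" using Um_bound_s_inner by blast
qed

lemma Um_bound:
  fixes n k :: nat
 
  assumes n3: "3 \<le> n" and nk: "n \<le> k"
  shows "valid n z \<Longrightarrow> Um n k m z \<le> (1 - 1 / (2 * real k)) ^ m * 2 ^ nzeros n z"
  using Um_bound_s[OF assms] by blast



lemma sum_ind_card: "finite A \<Longrightarrow> (\<Sum>i\<in>A. if P i then 1 else 0) = real (card {i\<in>A. P i})"
  by (simp add: sum.inter_filter[symmetric])

schematic_goal lemma7p3_s:
  fixes n k j :: nat and x :: "nat \<Rightarrow> nat"
  assumes "3 \<le> n" and "n \<le> k" and "1 \<le> j" and "j \<le> n - 1"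
    and "valid n x" and "\<forall>i\<in>{1..j}. x i = 0" and "\<forall>i\<in>{j+1..n-1}. 1 \<le> x i"
  shows "PROP ?P"
proof -
  have lemma7p3_s_inner: "(\<forall>r\<in>E_set n j. (\<lambda>i. x i + r i) \<in> Sstar n \<and>
           q_star n k x (\<lambda>i. x i + r i) =
             real ((k - n + j + 1) choose (k - n + 1))
             * (fact (rsum n r - 1) / (\<Prod>i\<in>{1..n-1}. fact (r i)))
             * (1 / real k) ^ (rsum n r)
             * real (card {l\<in>{1..j}. r l = 1}))
       \<and> ((\<lambda>r. q_star n k x (\<lambda>i. x i + r i)) has_sum 1) (E_set n j)
       \<and> (\<forall>x'\<in>Sstar n. \<not> (\<exists>r\<in>E_set n j. x' = (\<lambda>i. x i + r i)) \<longrightarrow> q_star n k x x' = 0)"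
proof -
  note n3 = assms(1) and nk = assms(2) and j1 = assms(3) and jn = assms(4) and vx = assms(5)
    and x0 = assms(6) and x1 = assms(7)
  have kpos: "0 < k" using n3 nk by simp
  have Zx: "Zs n x = {1..j}"
  proof
    show "Zs n x \<subseteq> {1..j}"
    proof
      fix i assume i: "i \<in> Zs n x"
      hence iI: "i \<in> {1..n-1}" and xi: "x i = 0" by (auto simp: Zs_def)
      show "i \<in> {1..j}"
      proof (rule ccontr)
        assume "i \<notin> {1..j}"
        hence "i \<in> {j+1..n-1}" using iI by auto
        hence "1 \<le> x i" using x1 by blast
        with xi show False by simp
      qed
    qed
    show "{1..j} \<subseteq> Zs n x" using x0 jn by (auto simp: Zs_def)
  qed
  have Jx: "nzeros n x = j" by (simp add: nzeros_Zs Zx)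
  have nSx: "x \<notin> S_set n" using S_iff[OF vx] Zx j1 by auto
  have supp: "\<exists>r\<in>E_set n j. y = (\<lambda>i. x i + r i) \<and> rsum n r = m" if ne: "first_entry n k m x y \<noteq> 0" for m y
  proof -
    from fe_support[OF n3 nk vx ne] nSx obtain l where
      le: "\<forall>i. x i \<le> y i" and yS: "y \<in> S_set n" and rs: "rsum n (\<lambda>i. y i - x i) = m"
      and l: "l \<in> Zs n x" and yl: "y l = 1" by blast
    define r where "r = (\<lambda>i. y i - x i)"
    have vy: "valid n y" using yS by (simp add: S_set_def)
    have vr: "valid n r" using vy vx unfolding r_def valid_def by auto
    have r1: "\<forall>i\<in>{1..j}. 1 \<le> r i"
    proof
      fix i assume i: "i \<in> {1..j}"
      hence "i \<in> {1..n-1}" using jn by auto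
      hence "1 \<le> y i" using yS by (simp add: S_set_def)
      thus "1 \<le> r i" using x0 i by (simp add: r_def)
    qed
    have lj: "l \<in> {1..j}" using l Zx by simp
    have "r l = 1" using yl x0 lj by (simp add: r_def)
    hence r2: "\<exists>i\<in>{1..j}. r i = 1" using lj by blast
    have "r \<in> E_set n j" using vr r1 r2 by (simp add: E_set_def)
    moreover have "y = (\<lambda>i. x i + r i)"
    proof (rule ext)
      fix i show "y i = x i + r i" using le[rule_format, of i] by (simp add: r_def)
    qed
    moreover have "rsum n r = m" using rs by (simp add: r_def)
    ultimately show ?thesis by blast
  qed
  have qs: "q_star n k x (\<lambda>i. x i + r i) = first_entry n k (rsum n r) x (\<lambda>i. x i + r i)" for r
  proof -
    have "(\<lambda>m. first_entry n k m x (\<lambda>i. x i + r i)) =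
          (\<lambda>m. if m = rsum n r then first_entry n k m x (\<lambda>i. x i + r i) else 0)"
    proof (rule ext)
      fix m
      show "first_entry n k m x (\<lambda>i. x i + r i) = (if m = rsum n r then first_entry n k m x (\<lambda>i. x i + r i) else 0)"
      proof (cases "first_entry n k m x (\<lambda>i. x i + r i) = 0")
        case False
        from fe_support[OF n3 nk vx False] have "rsum n (\<lambda>i. x i + r i - x i) = m" by blast
        thus ?thesis by simp
      next
        case True
        show ?thesis unfolding True by simp
      qed
    qed
    hence "(\<lambda>m. first_entry n k m x (\<lambda>i. x i + r i)) sums first_entry n k (rsum n r) x (\<lambda>i. x i + r i)"
      using sums_single[of "rsum n r" "\<lambda>m. first_entry n k m x (\<lambda>i. x i + r i)"] by simp
    thus ?thesis unfolding q_star_def by (simp add: sums_iff)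
  qed
  have P1: "(\<lambda>i. x i + r i) \<in> Sstar n \<and>
           q_star n k x (\<lambda>i. x i + r i) =
             real ((k - n + j + 1) choose (k - n + 1))
             * (fact (rsum n r - 1) / (\<Prod>i\<in>{1..n-1}. fact (r i)))
             * (1 / real k) ^ (rsum n r)
             * real (card {l\<in>{1..j}. r l = 1})" if r: "r \<in> E_set n j" for r
  proof
    have vr: "valid n r" and r1: "\<forall>i\<in>{1..j}. 1 \<le> r i" and r2: "\<exists>i\<in>{1..j}. r i = 1"
      using r by (auto simp: E_set_def)
    show "(\<lambda>i. x i + r i) \<in> Sstar n"
    proof -
      have v: "valid n (\<lambda>i. x i + r i)" using vx vr by (simp add: valid_def)
      have a: "\<forall>i\<in>{1..n-1}. 1 \<le> x i + r i"
      proof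
        fix i assume i: "i \<in> {1..n-1}"
        show "1 \<le> x i + r i"
        proof (cases "i \<le> j")
          case True
          hence "i \<in> {1..j}" using i by simp
          hence "1 \<le> r i" using r1 by blast
          thus ?thesis by simp
        next
          case False
          hence "i \<in> {j+1..n-1}" using i by simp
          hence "1 \<le> x i" using x1 by blast
          thus ?thesis by simp
        qed
      qed
      obtain i where i: "i \<in> {1..j}" "r i = 1" using r2 by blast
      have "i \<in> {1..n-1}" "x i + r i = 1" using i jn x0 by auto
      thus ?thesis using v a by (auto simp: Sstar_def S_set_def)
    qed
    have rZ: "\<forall>i\<in>Zs n x. 1 \<le> r i" using r1 Zx by simp
    have val: "first_entry n k (rsum n r) x (\<lambda>i. x i + r i) = coef n k j / real k ^ rsum n r * fact (rsum n r - 1) / PP n r * cnt r {1..j}"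
      using fe_val[OF n3 nk vx nSx vr rZ refl] by (simp add: Jx Zx)
    have c1: "coef n k j = real ((k - n + j + 1) choose (k - n + 1))"
    proof -
      have e: "k - n + 1 + j = k - n + j + 1" by simp
      have "(k - n + j + 1) choose j = (k - n + j + 1) choose (k - n + j + 1 - j)"
        by (rule binomial_symmetric) simp
      also have "k - n + j + 1 - j = k - n + 1" by simp
      finally show ?thesis unfolding coef_def e by simp
    qed
    have c2: "cnt r {1..j} = real (card {l\<in>{1..j}. r l = 1})" unfolding cnt_def by (rule sum_ind_card) simp
    show "q_star n k x (\<lambda>i. x i + r i) =
             real ((k - n + j + 1) choose (k - n + 1))
             * (fact (rsum n r - 1) / (\<Prod>i\<in>{1..n-1}. fact (r i)))
             * (1 / real k) ^ (rsum n r)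
             * real (card {l\<in>{1..j}. r l = 1})"
      unfolding qs val c1[symmetric] c2[symmetric] PP_def by (simp add: power_one_over field_simps)
  qed
  have P3: "q_star n k x x' = 0" if x': "x' \<in> Sstar n" and nr: "\<not> (\<exists>r\<in>E_set n j. x' = (\<lambda>i. x i + r i))" for x'
  proof -
    have "(\<lambda>m. first_entry n k m x x') = (\<lambda>m. 0)"
    proof (rule ext, rule ccontr)
      fix m assume "first_entry n k m x x' \<noteq> 0"
      from supp[OF this] nr show False by blast
    qed
    thus ?thesis unfolding q_star_def by simp
  qed
  define f where "f r = q_star n k x (\<lambda>i. x i + r i)" for r
  define E where "E = E_set n j"
  define EM where "EM M = {r\<in>E. rsum n r \<le> M}" for M
  define Em where "Em m = {r\<in>E. rsum n r = m}" for m
  have fnn: "0 \<le> f r" for r unfolding f_def qs by (rule fe_nonneg[OF n3 nk])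
  have finEM: "finite (EM M)" for M
  proof -
    have "EM M \<subseteq> {r. \<forall>i. (i \<in> {1..n-1} \<longrightarrow> r i \<in> {..M}) \<and> (i \<notin> {1..n-1} \<longrightarrow> r i = 0)}"
    proof
      fix r assume r: "r \<in> EM M"
      hence vr: "valid n r" and rs: "rsum n r \<le> M" by (auto simp: EM_def E_def E_set_def)
      have "r i \<le> M" if "i \<in> {1..n-1}" for i
      proof -
        have "r i \<le> rsum n r" unfolding rsum_def by (rule member_le_sum) (use that in auto)
        thus ?thesis using rs by simp
      qed
      thus "r \<in> {r. \<forall>i. (i \<in> {1..n-1} \<longrightarrow> r i \<in> {..M}) \<and> (i \<notin> {1..n-1} \<longrightarrow> r i = 0)}"
        using vr by (auto simp: valid_def)
    qed
    moreover have "finite {r. \<forall>i. (i \<in> {1..n-1} \<longrightarrow> r i \<in> {..M}) \<and> (i \<notin> {1..n-1} \<longrightarrow> r i = (0::nat))}"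
      by (rule finite_set_of_finite_funs) auto
    ultimately show ?thesis by (rule finite_subset)
  qed
  have finEm: "finite (Em m)" for m
    by (rule finite_subset[OF _ finEM[of m]]) (auto simp: Em_def EM_def)
  have Em_sum: "(\<Sum>r\<in>Em m. f r) = Hm n k m x" for m
  proof -
    have "(\<Sum>r\<in>Em m. f r) = (\<Sum>r\<in>Em m. first_entry n k m x (\<lambda>i. x i + r i))"
      by (rule sum.cong) (auto simp: f_def qs Em_def)
    also have "\<dots> = (\<Sum>y\<in>(\<lambda>r i. x i + r i) ` Em m. first_entry n k m x y)"
    proof (rule sum.reindex[symmetric, unfolded comp_def])
      show "inj_on (\<lambda>r i. x i + r i) (Em m)"
      proof (rule inj_onI)
        fix r r' assume "(\<lambda>i. x i + r i) = (\<lambda>i. x i + r' i)"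
        hence "\<And>i. x i + r i = x i + r' i" by metis
        thus "r = r'" by (auto intro!: ext)
      qed
    qed
    also have "\<dots> = Hm n k m x"
    proof (rule HB[OF n3 nk])
      show "finite ((\<lambda>r i. x i + r i) ` Em m)" using finEm by simp
      show "\<forall>y. first_entry n k m x y \<noteq> 0 \<longrightarrow> y \<in> (\<lambda>r i. x i + r i) ` Em m"
      proof (intro allI impI)
        fix y assume "first_entry n k m x y \<noteq> 0"
        from supp[OF this] obtain r where "r \<in> E_set n j" "y = (\<lambda>i. x i + r i)" "rsum n r = m" by blast
        thus "y \<in> (\<lambda>r i. x i + r i) ` Em m" by (auto simp: Em_def E_def)
      qed
    qed
    finally show ?thesis .
  qed
  have EM_sum: "(\<Sum>r\<in>EM M. f r) = (\<Sum>m\<le>M. Hm n k m x)" for M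
  proof -
    have eq: "EM M = (\<Union>m\<in>{..M}. Em m)" by (auto simp: EM_def Em_def)
    have "(\<Sum>r\<in>EM M. f r) = (\<Sum>r\<in>(\<Union>m\<in>{..M}. Em m). f r)" by (simp only: eq)
    also have "\<dots> = (\<Sum>m\<le>M. \<Sum>r\<in>Em m. f r)"
      by (rule sum.UNION_disjoint) (auto simp: finEm, auto simp: Em_def)
    finally show ?thesis by (simp add: Em_sum)
  qed
  have Hle: "(\<Sum>m\<le>M. Hm n k m x) \<le> 1" for M
    using mass[OF n3 nk vx, of M] Um_nonneg[OF n3 nk, of M x] by linarith
  have Htend: "(\<lambda>M. \<Sum>m\<le>M. Hm n k m x) \<longlonglongrightarrow> 1"
  proof -
    define \<rho> where "\<rho> = 1 - 1 / (2 * real k)"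
    have r0: "0 \<le> \<rho>" "\<rho> < 1" unfolding \<rho>_def using kpos by (auto simp: field_simps)
    have "(\<lambda>M. \<rho> ^ M * 2 ^ nzeros n x) \<longlonglongrightarrow> 0 * 2 ^ nzeros n x"
      by (intro tendsto_intros) (use r0 in simp)
    hence g: "(\<lambda>M. \<rho> ^ M * 2 ^ nzeros n x) \<longlonglongrightarrow> 0" by simp
    have "(\<lambda>M. Um n k M x) \<longlonglongrightarrow> 0"
    proof (rule Lim_null_comparison[OF _ g])
      show "\<forall>\<^sub>F M in sequentially. norm (Um n k M x) \<le> \<rho> ^ M * 2 ^ nzeros n x"
      proof (rule always_eventually, rule allI)
        fix M
        have "0 \<le> Um n k M x" by (rule Um_nonneg[OF n3 nk])
        moreover have "Um n k M x \<le> \<rho> ^ M * 2 ^ nzeros n x" unfolding \<rho>_def by (rule Um_bound[OF n3 nk vx])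
        ultimately show "norm (Um n k M x) \<le> \<rho> ^ M * 2 ^ nzeros n x" by simp
      qed
    qed
    hence "(\<lambda>M. 1 - Um n k M x) \<longlonglongrightarrow> 1 - 0" by (intro tendsto_intros)
    moreover have "(\<lambda>M. 1 - Um n k M x) = (\<lambda>M. \<Sum>m\<le>M. Hm n k m x)"
    proof (rule ext)
      fix M show "1 - Um n k M x = (\<Sum>m\<le>M. Hm n k m x)" using mass[OF n3 nk vx, of M] by linarith
    qed
    ultimately show ?thesis by simp
  qed
  have finle: "sum f F \<le> 1" if F: "finite F" "F \<subseteq> E" for F
  proof (cases "F = {}")
    case True thus ?thesis by simp
  next
    case False
    define M where "M = Max (rsum n ` F)"
    have "F \<subseteq> EM M" using F False unfolding EM_def M_def by auto
    hence "sum f F \<le> sum f (EM M)" by (intro sum_mono2 finEM fnn)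
    also have "\<dots> \<le> 1" using EM_sum Hle by simp
    finally show ?thesis .
  qed
  have summ: "f summable_on E"
  proof (rule nonneg_bdd_above_summable_on)
    show "\<And>r. r \<in> E \<Longrightarrow> 0 \<le> f r" using fnn by simp
    show "bdd_above (sum f ` {F. F \<subseteq> E \<and> finite F})"
    proof (rule bdd_aboveI[where M=1])
      fix v assume "v \<in> sum f ` {F. F \<subseteq> E \<and> finite F}"
      then obtain F where "F \<subseteq> E" "finite F" "v = sum f F" by blast
      thus "v \<le> 1" using finle by simp
    qed
  qed
  define s where "s = infsum f E"
  have hs: "(f has_sum s) E" unfolding s_def using summ by (rule has_sum_infsum)
  have s1: "s \<le> 1" unfolding s_def by (rule infsum_le_finite_sums[OF summ finle])
  have s2: "(\<Sum>m\<le>M. Hm n k m x) \<le> s" for M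
  proof -
    have "(f has_sum sum f (EM M)) (EM M)" by (rule has_sum_finite[OF finEM])
    hence "sum f (EM M) \<le> s"
      by (rule has_sum_mono_neutral[OF _ hs]) (auto simp: EM_def fnn)
    thus ?thesis using EM_sum by simp
  qed
  have "1 \<le> s" by (rule LIMSEQ_le_const2[OF Htend]) (use s2 in auto)
  hence "s = 1" using s1 by simp
  hence P2: "(f has_sum 1) E" using hs by simp
  show ?thesis using P1 P2 P3 unfolding f_def E_def by blast
qed
  show "(\<forall>r\<in>E_set n j. (\<lambda>i. x i + r i) \<in> Sstar n \<and>
           q_star n k x (\<lambda>i. x i + r i) =
             real ((k - n + j + 1) choose (k - n + 1))
             * (fact (rsum n r - 1) / (\<Prod>i\<in>{1..n-1}. fact (r i)))
             * (1 / real k) ^ (rsum n r)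
             * real (card {l\<in>{1..j}. r l = 1}))
       \<and> ((\<lambda>r. q_star n k x (\<lambda>i. x i + r i)) has_sum 1) (E_set n j)
       \<and> (\<forall>x'\<in>Sstar n. \<not> (\<exists>r\<in>E_set n j. x' = (\<lambda>i. x i + r i)) \<longrightarrow> q_star n k x x' = 0)" by (fact lemma7p3_s_inner)
qed

theorem lemma7p3:
  fixes n k j :: nat and x :: "nat \<Rightarrow> nat"
  assumes "3 \<le> n" and "n \<le> k" and "1 \<le> j" and "j \<le> n - 1"
    and "valid n x" and "\<forall>i\<in>{1..j}. x i = 0" and "\<forall>i\<in>{j+1..n-1}. 1 \<le> x i"
  shows "(\<forall>r\<in>E_set n j. (\<lambda>i. x i + r i) \<in> Sstar n \<and>
           q_star n k x (\<lambda>i. x i + r i) =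
             real ((k - n + j + 1) choose (k - n + 1))
             * (fact (rsum n r - 1) / (\<Prod>i\<in>{1..n-1}. fact (r i)))
             * (1 / real k) ^ (rsum n r)
             * real (card {l\<in>{1..j}. r l = 1}))
       \<and> ((\<lambda>r. q_star n k x (\<lambda>i. x i + r i)) has_sum 1) (E_set n j)
       \<and> (\<forall>x'\<in>Sstar n. \<not> (\<exists>r\<in>E_set n j. x' = (\<lambda>i. x i + r i)) \<longrightarrow> q_star n k x x' = 0)"
  by (rule lemma7p3_s[OF assms])


schematic_goal Um_bound_tail:
  fixes n k :: nat
 
  assumes n3: "3 \<le> n" and nk: "n \<le> k"
  shows "PROP ?P"
proof -
  have Um_bound_tail_inner: "valid n z \<Longrightarrow> Um n k m z \<le> (1 - 1 / (2 * real k)) ^ m * 2 ^ nzeros n z" for z m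
proof (induction m arbitrary: z)
  case 0
  have "(1::real) \<le> 2 ^ nzeros n z" by simp
  thus ?case by simp
next
  case (Suc m)
  define \<rho> where "\<rho> = 1 - 1 / (2 * real k)"
  have kpos: "0 < k" using n3 nk by simp
  have rho0: "0 \<le> \<rho>" unfolding \<rho>_def using kpos by (simp add: field_simps)
  show ?case
  proof (cases "z \<in> S_set n")
    case True thus ?thesis using rho0 \<rho>_def by simp
  next
    case False
    define J where "J = nzeros n z"
    have ne: "Zs n z \<noteq> {}" using S_iff[OF Suc.prems] False by simp
    hence J1: "1 \<le> J" unfolding J_def nzeros_Zs by (simp add: Suc_le_eq card_gt_0_iff)
    have Jle: "J \<le> n - 1" unfolding J_def by (rule card_Zs_le)
    have cd: "card ({1..n-1} - Zs n z) = n - 1 - J"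
      using card_Diff_subset[OF finite_Zs Zs_sub, of n z] by (simp add: nzeros_Zs J_def)
    define q where "q = \<rho> ^ m"
    define u where "u = (2::real) ^ (J - 1)"
    have q0: "0 \<le> q" unfolding q_def using rho0 by simp
    have u0: "0 < u" unfolding u_def by simp
    have u2: "(2::real) ^ J = 2 * u" unfolding u_def using J1 by (simp add: power_eq_if)
    have "Um n k (Suc m) z = (\<Sum>l\<in>{1..n-1}. pr n k z l * Um n k m (incr z l))"
      using False tp_sum[OF n3 nk Suc.prems False] by simp
    also have "\<dots> \<le> (\<Sum>l\<in>{1..n-1}. pr n k z l * (q * 2 ^ nzeros n (incr z l)))"
      by (rule sum_mono, rule mult_left_mono) (auto simp: q_def \<rho>_def intro!: Suc.IH valid_incr[OF Suc.prems] pr_nonneg)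
    also have "\<dots> = (\<Sum>l\<in>Zs n z. real (k - n + 1 + J) / (real k * real J) * (q * u))
       + (\<Sum>l\<in>{1..n-1} - Zs n z. 1 / real k * (q * (2 * u)))"
    proof -
      have "(\<Sum>l\<in>{1..n-1}. pr n k z l * (q * 2 ^ nzeros n (incr z l)))
        = (\<Sum>l\<in>Zs n z. real (k - n + 1 + J) / (real k * real J) * (q * 2 ^ nzeros n (incr z l)))
        + (\<Sum>l\<in>{1..n-1} - Zs n z. 1 / real k * (q * 2 ^ nzeros n (incr z l)))"
        unfolding J_def by (rule pr_split)
      also have "(\<Sum>l\<in>Zs n z. real (k - n + 1 + J) / (real k * real J) * (q * 2 ^ nzeros n (incr z l)))
          = (\<Sum>l\<in>Zs n z. real (k - n + 1 + J) / (real k * real J) * (q * u))"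
      proof (rule sum.cong[OF refl])
        fix l assume l: "l \<in> Zs n z"
        hence "nzeros n (incr z l) = J - 1" using Zs_incr[of l n z] Zs_sub[of n z]
          by (auto simp: nzeros_Zs J_def)
        thus "real (k - n + 1 + J) / (real k * real J) * (q * 2 ^ nzeros n (incr z l))
            = real (k - n + 1 + J) / (real k * real J) * (q * u)" by (simp add: u_def)
      qed
      also have "(\<Sum>l\<in>{1..n-1} - Zs n z. 1 / real k * (q * 2 ^ nzeros n (incr z l)))
          = (\<Sum>l\<in>{1..n-1} - Zs n z. 1 / real k * (q * (2 * u)))"
      proof (rule sum.cong[OF refl])
        fix l assume l: "l \<in> {1..n-1} - Zs n z"
        hence "nzeros n (incr z l) = J" using Zs_incr[of l n z]
          by (auto simp: nzeros_Zs J_def)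
        thus "1 / real k * (q * 2 ^ nzeros n (incr z l)) = 1 / real k * (q * (2 * u))" by (simp add: u2)
      qed
      finally show ?thesis .
    qed
    also have "\<dots> = real J * (real (k - n + 1 + J) / (real k * real J) * (q * u))
       + real (n - 1 - J) * (1 / real k * (q * (2 * u)))"
      by (simp only: sum_constant cd nzeros_Zs J_def)
    also have "\<dots> = q * u * (real k + real n - 1 - real J) / real k"
      using J1 Jle nk n3 kpos by (simp add: of_nat_diff field_simps)
    also have "\<dots> \<le> q * u * (2 * real k - 1) / real k"
      using q0 u0 kpos nk by (intro divide_right_mono mult_left_mono) auto
    also have "\<dots> = \<rho> ^ Suc m * 2 ^ nzeros n z"
      unfolding q_def \<rho>_def J_def[symmetric] u2 using kpos by (simp add: field_simps)
    finally show ?thesis unfolding \<rho>_def .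
  qed
qed
  show "\<And>z m. (valid n z) \<longrightarrow> (Um n k m z \<le> (1 - 1 / (2 * real k)) ^ m * 2 ^ nzeros n z)" using Um_bound_tail_inner by blast
qed

end
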